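(* Let $n\ge2$, let $\mathsf r=[r_1,\dots,r_{2n-2}]$ be a tree-like factorization of $\lambda_n$, and let $k\in\{1,\dots,n-1\}$. Then exactly two of the reflections $r_1,\dots,r_{2n-2}$ increase $k$, namely the first and the last reflection in the sequence having an endpoint congruent to $k$ modulo $n$ (i.e. expressible as $(\!(a,b)\!)$ with $a\equiv k$ or $b\equiv k \pmod n$). Moreover there is an integer $b_k$ such that: if $b_k>k$, these two reflections are $(\!(b_k-n,k)\!)$ (the earlier one) and $(\!(k,b_k)\!)$ (the later one); if $b_k<k$, they are $(\!(b_k,k)\!)$ (the earlier one) and $(\!(k-n,b_k)\!)$ (the later one).
   Context: The affine symmetric group $\widetilde S_n$ is the group, under composition $(vw)(k)=v(w(k))$, of bijections $w:\mathbb Z\to\mathbb Z$ with $w(i+n)=w(i)+n$ and $\sum_{i=1}^n w(i)=\binom{n+1}{2}$. For $i\not\equiv j\pmod n$, $(\!(i,j)\!)$ is the affine reflection interchanging $i+kn$ and $j+kn$ for all $k\in\mathbb Z$; $(\!(i,j)\!)=(\!(j,i)\!)=(\!(i+kn,j+kn)\!)$. Let $\lambda_n$ be the element with $\lambda_n(k)=k+n$ for $k\not\equiv0\pmod n$ and $\lambda_n(k)=k-n(n-1)$ for $k\equiv 0\pmod n$; its reflection length is $2n-2$. $\textsc{fact}(\lambda_n)$ is the set of sequences $[r_1,\dots,r_{2n-2}]$ of reflections with $r_1\cdots r_{2n-2}=\lambda_n$. Such a sequence is tree-like if one can write $r_k=(\!(a_{k-1},b_k)\!)$ with integers $a_{k-1}<b_k$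 ($1\le k\le 2n-2$) and $a_k\equiv b_k\pmod n$ ($1\le k\le 2n-3$). A reflection $r_\ell$ of $\mathsf r$ increases (resp. decreases) an integer $k$ if $r_\ell r_{\ell+1}\cdots r_{2n-2}(k)>r_{\ell+1}\cdots r_{2n-2}(k)$ (resp. $<$), where the empty product is the identity. *)

theory Defs
  imports Main
begin

text \<open>Affine permutations are modelled as functions int => int; the group
operation is composition, (v w)(k) = v (w k).\<close>

definition arefl :: "int \<Rightarrow> int \<Rightarrow> int \<Rightarrow> int \<Rightarrow> int" where
  "arefl n i j = (\<lambda>m. if m mod n = i mod n then m + (j - i)
                      else if m mod n = j mod n then m + (i - j) else m)"

definition is_arefl :: "int \<Rightarrow> (int \<Rightarrow> int) \<Rightarrow> bool" where
  "is_arefl n r \<longleftrightarrow> (\<exists>i j. i mod n \<noteq> j mod n \<and> r = arefl n i j)"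

definition lambda_n :: "int \<Rightarrow> int \<Rightarrow> int" where
  "lambda_n n m = (if m mod n = 0 then m - n * (n - 1) else m + n)"

definition prodl :: "(int \<Rightarrow> int) list \<Rightarrow> int \<Rightarrow> int" where
  "prodl rs = foldr (\<circ>) rs id"

definition fact_lambda :: "int \<Rightarrow> (int \<Rightarrow> int) list \<Rightarrow> bool" where
  "fact_lambda n rs \<longleftrightarrow> length rs = nat (2 * n - 2) \<and> (\<forall>r\<in>set rs. is_arefl n r)
     \<and> prodl rs = lambda_n n"

text \<open>Tree-like: r_k = ((a_{k-1}, b_k)) with a_{k-1} < b_k (1 <= k <= 2n-2) and
a_k = b_k mod n (1 <= k <= 2n-3). Indices are 1-based: r_k = rs ! (k-1).\<close>
definition tree_like :: "int \<Rightarrow> (int \<Rightarrow> int) list \<Rightarrow> bool" where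
  "tree_like n rs \<longleftrightarrow> (\<exists>a b :: nat \<Rightarrow> int.
     (\<forall>k\<in>{1..nat (2 * n - 2)}. a (k - 1) < b k \<and> rs ! (k - 1) = arefl n (a (k - 1)) (b k))
     \<and> (\<forall>k\<in>{1..nat (2 * n - 3)}. a k mod n = b k mod n))"

definition increases :: "(int \<Rightarrow> int) list \<Rightarrow> nat \<Rightarrow> int \<Rightarrow> bool" where
  "increases rs l m \<longleftrightarrow> prodl (drop (l - 1) rs) m > prodl (drop l rs) m"

definition has_endpoint :: "int \<Rightarrow> (int \<Rightarrow> int) \<Rightarrow> int \<Rightarrow> bool" where
  "has_endpoint n r m \<longleftrightarrow> (\<exists>a b. a mod n \<noteq> b mod n \<and> r = arefl n a b
     \<and> (a mod n = m mod n \<or> b mod n = m mod n))"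

end

theory Submission
  imports Defs
begin

lemma mod_shift: "(n::int) > 0 \<Longrightarrow> x mod n = a mod n \<Longrightarrow> (x + (b - a)) mod n = b mod n"
  by (metis add.commute diff_add_cancel mod_add_left_eq)

lemma arefl_mod_iff:
  assumes n: "(n::int) > 0" and ne: "a mod n \<noteq> b mod n"
  shows "(arefl n a b x mod n = arefl n a b x' mod n) = (x mod n = x' mod n)"
proof -
  have h: "\<And>z. arefl n a b z mod n = (if z mod n = a mod n then b mod n else if z mod n = b mod n then a mod n else z mod n)"
    using mod_shift[OF n] by (simp add: arefl_def)
  show ?thesis unfolding h using ne by auto
qed

lemma prodl_Nil: "prodl [] = id" by (simp add: prodl_def)
lemma prodl_Cons: "prodl (r # rs) = r \<circ> prodl rs" by (simp add: prodl_def)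

lemma prodl_mod_iff:
  assumes n: "(n::int) > 0" and "\<forall>r\<in>set rs. is_arefl n r"
  shows "(prodl rs x mod n = prodl rs x' mod n) = (x mod n = x' mod n)"
  using assms(2)
proof (induction rs)
  case Nil then show ?case by (simp add: prodl_Nil)
next
  case (Cons r rs)
  then obtain i j where "i mod n \<noteq> j mod n" "r = arefl n i j" by (auto simp: is_arefl_def)
  with Cons show ?case using arefl_mod_iff[OF n] by (simp add: prodl_Cons)
qed

lemma arefl_not_trans:
  assumes n: "(n::int) > 0" and "is_arefl n (arefl n a b)"
  shows "a mod n \<noteq> b mod n"
proof
  assume ab: "a mod n = b mod n"
  obtain i j where ij: "i mod n \<noteq> j mod n" "arefl n a b = arefl n i j" using assms(2) by (auto simp: is_arefl_def)
  have "arefl n i j i = j" by (simp add: arefl_def)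
  moreover have "arefl n a b i mod n = i mod n"
    using ab mod_shift[OF n] by (auto simp: arefl_def)
  ultimately show False using ij by simp
qed

lemma arefl_cong:
  assumes n: "(n::int) > 0" and "i mod n = i' mod n" and "j - i = j' - i'"
  shows "arefl n i j = arefl n i' j'"
proof -
  have "j mod n = j' mod n" using mod_shift[OF n, of i i' j] assms
    by (metis add.commute diff_add_cancel mod_add_left_eq)
  then show ?thesis using assms unfolding arefl_def by (intro ext) auto
qed

lemma arefl_moves:
  assumes "a mod n \<noteq> b mod n" and "x mod n = a mod n \<or> x mod n = b mod n"
  shows "arefl n a b x \<noteq> x"
  using assms unfolding arefl_def by auto

lemma card_filter_sum: "finite A \<Longrightarrow> card {x\<in>A. P x} = (\<Sum>x\<in>A. of_bool (P x) :: nat)"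
proof -
  assume "finite A"
  moreover have "A \<inter> {x. P x} = {x\<in>A. P x}" by auto
  ultimately show ?thesis using sum_of_bool_eq[of A P] by simp
qed

theorem corollary3p6:
  fixes n k :: int and rs :: "(int \<Rightarrow> int) list"
  assumes "n \<ge> 2"
    and "fact_lambda n rs"
    and "tree_like n rs"
    and "1 \<le> k" and "k \<le> n - 1"
  shows "\<exists>f l. f \<in> {1..length rs} \<and> l \<in> {1..length rs} \<and> f < l
     \<and> has_endpoint n (rs ! (f - 1)) k \<and> has_endpoint n (rs ! (l - 1)) k
     \<and> (\<forall>j\<in>{1..length rs}. has_endpoint n (rs ! (j - 1)) k \<longrightarrow> f \<le> j \<and> j \<le> l)
     \<and> {j \<in> {1..length rs}. increases rs j k} = {f, l}
     \<and> (\<exists>bk. bk \<noteq> k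
          \<and> (bk > k \<longrightarrow> rs ! (f - 1) = arefl n (bk - n) k \<and> rs ! (l - 1) = arefl n k bk)
          \<and> (bk < k \<longrightarrow> rs ! (f - 1) = arefl n bk k \<and> rs ! (l - 1) = arefl n (k - n) bk))"
proof -
  have n0: "n > 0" using assms(1) by simp
  define m where "m = length rs"
  have m: "m = nat (2*n-2)" and isr: "\<forall>r\<in>set rs. is_arefl n r" and prod: "prodl rs = lambda_n n"
    using assms(2) by (auto simp: fact_lambda_def m_def)
  have m2: "m \<ge> 2" using m assms(1) by linarith
  have m3: "nat (2*n-3) = m - 1" using m assms(1) by linarith
  obtain a b where ab1: "\<forall>i\<in>{1..m}. a (i-1) < b i \<and> rs!(i-1) = arefl n (a(i-1)) (b i)"
    and ab2: "\<forall>i\<in>{1..m-1}. a i mod n = b i mod n"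
    using assms(3) unfolding tree_like_def m[symmetric] m3 by blast
  define Q where "Q i = prodl (drop i rs)" for i
  have Qm: "Q m = id" by (simp add: Q_def m_def prodl_Nil)
  have Q0: "Q 0 = lambda_n n" by (simp add: Q_def prod)
  have R: "\<And>i. 1 \<le> i \<Longrightarrow> i \<le> m \<Longrightarrow> rs!(i-1) = arefl n (a(i-1)) (b i)" using ab1 by auto
  have lt: "\<And>i. 1 \<le> i \<Longrightarrow> i \<le> m \<Longrightarrow> a(i-1) < b i" using ab1 by auto
  have chain: "\<And>i. 1 \<le> i \<Longrightarrow> i < m \<Longrightarrow> a i mod n = b i mod n" using ab2 by auto
  have ne: "\<And>i. 1 \<le> i \<Longrightarrow> i \<le> m \<Longrightarrow> a(i-1) mod n \<noteq> b i mod n"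
  proof -
    fix i assume "1 \<le> i" "i \<le> m"
    then have "rs!(i-1) \<in> set rs" by (simp add: m_def)
    then show "a(i-1) mod n \<noteq> b i mod n" using isr R[OF \<open>1 \<le> i\<close> \<open>i \<le> m\<close>] arefl_not_trans[OF n0] by auto
  qed
  have Qstep: "\<And>i x. 1 \<le> i \<Longrightarrow> i \<le> m \<Longrightarrow> Q (i-1) x = arefl n (a(i-1)) (b i) (Q i x)"
  proof -
    fix i x assume i: "1 \<le> i" "i \<le> m"
    have "rs!(i-1) # drop (Suc (i-1)) rs = drop (i-1) rs"
      by (rule Cons_nth_drop_Suc) (use i in \<open>simp add: m_def\<close>)
    moreover have "Suc (i-1) = i" using i by simp
    ultimately have "drop (i-1) rs = rs!(i-1) # drop i rs" by simp
    then show "Q (i-1) x = arefl n (a(i-1)) (b i) (Q i x)" using R[OF i] by (simp add: Q_def prodl_Cons)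
  qed
  have up: "\<And>i x. 1 \<le> i \<Longrightarrow> i \<le> m \<Longrightarrow> x mod n = a(i-1) mod n \<Longrightarrow> arefl n (a(i-1)) (b i) x = x + (b i - a(i-1))"
    by (simp add: arefl_def)
  have down: "\<And>i x. 1 \<le> i \<Longrightarrow> i \<le> m \<Longrightarrow> x mod n = b i mod n \<Longrightarrow> arefl n (a(i-1)) (b i) x = x + (a(i-1) - b i)"
  proof -
    fix i x assume i: "1 \<le> i" "i \<le> m" and x: "x mod n = b i mod n"
    then have "x mod n \<noteq> a(i-1) mod n" using ne[OF i] by simp
    then show "arefl n (a(i-1)) (b i) x = x + (a(i-1) - b i)" using x by (simp add: arefl_def)
  qed
  have fixd: "\<And>i x. x mod n \<noteq> a(i-1) mod n \<Longrightarrow> x mod n \<noteq> b i mod n \<Longrightarrow> arefl n (a(i-1)) (b i) x = x"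
    by (simp add: arefl_def)
  have P: "\<And>y. i < m \<Longrightarrow> Q i y mod n = a i mod n \<Longrightarrow> Q 0 y \<le> Q i y \<and> Q 0 y mod n = a 0 mod n" for i
  proof (induction i)
    case 0 then show ?case by simp
  next
    case (Suc i)
    have c: "Q (Suc i) y mod n = b (Suc i) mod n" using Suc.prems chain[of "Suc i"] by simp
    have e: "Q i y = Q (Suc i) y + (a i - b (Suc i))"
      using Qstep[of "Suc i" y] down[of "Suc i" "Q (Suc i) y"] c Suc.prems by simp
    have "a i < b (Suc i)" using lt[of "Suc i"] Suc.prems by simp
    moreover have "Q i y mod n = a i mod n" using e mod_shift[OF n0 c] by simp
    ultimately show ?case using Suc.IH[of y] Suc.prems e by simp
  qed
  have a0: "a 0 mod n = 0"
  proof -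
    have "Q (m-1) (b m) = a (m-1)"
      using Qstep[of m "b m"] Qm down[of m "b m"] m2 by simp
    then have "Q 0 (b m) \<le> a (m-1) \<and> Q 0 (b m) mod n = a 0 mod n"
      using P[of "m-1" "b m"] m2 by simp
    moreover have "a (m-1) < b m" using lt[of m] m2 by simp
    ultimately have h: "lambda_n n (b m) < b m" "lambda_n n (b m) mod n = a 0 mod n" using Q0 by auto
    then have "b m mod n = 0" unfolding lambda_n_def using n0 by (auto split: if_splits)
    moreover have "(b m - n*(n-1)) mod n = b m mod n"
      using mod_diff_eq[of "b m" n "n*(n-1)", symmetric] by simp
    ultimately show ?thesis using h unfolding lambda_n_def by simp
  qed
  have Qy0: "\<And>y. 1 \<le> y \<Longrightarrow> y \<le> n - 1 \<Longrightarrow> Q 0 y = y + n"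
    using Q0 unfolding lambda_n_def by simp
  have nodec: "\<And>y i. 1 \<le> y \<Longrightarrow> y \<le> n - 1 \<Longrightarrow> 1 \<le> i \<Longrightarrow> i \<le> m \<Longrightarrow> \<not> Q (i-1) y < Q i y"
  proof
    fix y i assume y: "1 \<le> y" "y \<le> n - 1" and i: "1 \<le> i" "i \<le> m" and dec: "Q (i-1) y < Q i y"
    have c: "Q i y mod n = b i mod n"
    proof (rule ccontr)
      assume "Q i y mod n \<noteq> b i mod n"
      then show False using dec Qstep[OF i] up[OF i] fixd[of "Q i y" i] lt[OF i]
        by (cases "Q i y mod n = a(i-1) mod n") auto
    qed
    have "Q (i-1) y mod n = a (i-1) mod n"
      using Qstep[OF i] down[OF i c] mod_shift[OF n0 c] by simp
    then have "Q 0 y mod n = 0" using P[of "i-1" y] i a0 by simp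
    moreover have "y mod n = y" using y by simp
    ultimately show False using Qy0[OF y] y by simp
  qed
  define I where "I y = {i \<in> {1..m}. Q (i-1) y \<noteq> Q i y}" for y
  have finI: "finite (I y)" for y by (simp add: I_def)
  have moveI: "\<And>y i. 1 \<le> y \<Longrightarrow> y \<le> n - 1 \<Longrightarrow> i \<in> I y \<Longrightarrow>
      Q i y mod n = a(i-1) mod n \<and> Q (i-1) y = Q i y + (b i - a(i-1)) \<and> Q (i-1) y mod n = b i mod n"
  proof -
    fix y i assume y: "1 \<le> y" "y \<le> n - 1" and iI: "i \<in> I y"
    then have i: "1 \<le> i" "i \<le> m" and mv: "Q (i-1) y \<noteq> Q i y" by (auto simp: I_def)
    have c: "Q i y mod n = a(i-1) mod n"
    proof (rule ccontr)
      assume na: "Q i y mod n \<noteq> a(i-1) mod n"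
      show False
      proof (cases "Q i y mod n = b i mod n")
        case True
        then show False using nodec[OF y i] Qstep[OF i] down[OF i True] lt[OF i] by simp
      next
        case False
        then show False using mv Qstep[OF i] fixd[OF na False] by simp
      qed
    qed
    then show "Q i y mod n = a(i-1) mod n \<and> Q (i-1) y = Q i y + (b i - a(i-1)) \<and> Q (i-1) y mod n = b i mod n"
      using Qstep[OF i] up[OF i c] mod_shift[OF n0 c] by simp
  qed
  have const: "\<And>p y. p \<le> q \<Longrightarrow> (\<forall>i\<in>{Suc p..q}. Q (i-1) y = Q i y) \<Longrightarrow> Q p y = Q q y" for q
  proof (induction q)
    case 0 then show ?case by simp
  next
    case (Suc q)
    show ?case
    proof (cases "p = Suc q")
      case True then show ?thesis by simp
    next
      case False
      then have "p \<le> q" using Suc.prems by simp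
      then have "Q p y = Q q y" using Suc.IH[of p y] Suc.prems by auto
      also have "\<dots> = Q (Suc q) y" using bspec[OF Suc.prems(2), of "Suc q"] \<open>p \<le> q\<close> by simp
      finally show ?thesis .
    qed
  qed
  have constI: "\<And>p q y. p \<le> q \<Longrightarrow> q \<le> m \<Longrightarrow> (\<forall>i\<in>{Suc p..q}. i \<notin> I y) \<Longrightarrow> Q p y = Q q y"
  proof -
    fix p q y assume "p \<le> q" "q \<le> m" "\<forall>i\<in>{Suc p..q}. i \<notin> I y"
    then show "Q p y = Q q y" using const[of p q y] by (auto simp: I_def)
  qed
  have card2: "\<And>y. 1 \<le> y \<Longrightarrow> y \<le> n - 1 \<Longrightarrow> card (I y) \<ge> 2"
  proof (rule ccontr)
    fix y assume y: "1 \<le> y" "y \<le> n - 1" and c: "\<not> 2 \<le> card (I y)"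
    have ym: "(y + n) mod n = y mod n" by simp
    show False
    proof (cases "card (I y) = 0")
      case True
      then have "I y = {}" using finI by simp
      then have "Q 0 y = Q m y" using constI[of 0 m y] by simp
      then show False using Qy0[OF y] Qm n0 by simp
    next
      case False
      then have "card (I y) = 1" using c by simp
      then obtain l where l: "I y = {l}" using card_1_singletonE by blast
      then have lI: "l \<in> I y" by simp
      then have li: "1 \<le> l" "l \<le> m" by (auto simp: I_def)
      have "Q l y = Q m y" apply (rule constI) using l li by auto
      then have q1: "Q l y = y" using Qm by simp
      have "Q 0 y = Q (l-1) y" apply (rule constI) using l li by auto
      moreover have "Q (l-1) y mod n = b l mod n" using moveI[OF y lI] by blast
      ultimately have "Q 0 y mod n = b l mod n" by simp
      then have "(y + n) mod n = b l mod n" using Qy0[OF y] by simp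
      moreover have "y mod n = a (l-1) mod n" using moveI[OF y lI] q1 by simp
      ultimately show False using ne[OF li] ym by simp
    qed
  qed
  have card1: "\<And>i. card {y \<in> {1..n-1}. i \<in> I y} \<le> 1"
  proof -
    fix i
    have fin: "finite {y \<in> {1..n-1}. i \<in> I y}" by (rule finite_subset[of _ "{1..n-1}"]) auto
    have "\<forall>y\<in>{y \<in> {1..n-1}. i \<in> I y}. \<forall>y'\<in>{y \<in> {1..n-1}. i \<in> I y}. y = y'"
    proof (intro ballI)
      fix y y' assume yy: "y \<in> {y \<in> {1..n-1}. i \<in> I y}" "y' \<in> {y \<in> {1..n-1}. i \<in> I y}"
      then have "Q i y mod n = Q i y' mod n" using moveI by auto
      moreover have "\<forall>r\<in>set (drop i rs). is_arefl n r" using isr by (meson in_set_dropD)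
      ultimately have "y mod n = y' mod n" using prodl_mod_iff[OF n0] by (simp add: Q_def)
      then show "y = y'" using yy by simp
    qed
    then show "card {y \<in> {1..n-1}. i \<in> I y} \<le> 1" using card_le_Suc0_iff_eq[OF fin] by simp
  qed
  have sumeq: "(\<Sum>y\<in>{1..n-1}. card (I y)) = (\<Sum>i\<in>{1..m}. card {y \<in> {1..n-1}. i \<in> I y})"
  proof -
    have "(\<Sum>y\<in>{1..n-1}. card (I y)) = (\<Sum>y\<in>{1..n-1}. \<Sum>i\<in>{1..m}. of_bool (i \<in> I y))"
    proof (rule sum.cong[OF HOL.refl])
      fix x
      have "card {i\<in>{1..m}. i \<in> I x} = (\<Sum>i\<in>{1..m}. of_bool (i \<in> I x))" by (rule card_filter_sum) simp
      moreover have "{i\<in>{1..m}. i \<in> I x} = I x" by (auto simp: I_def)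
      ultimately show "card (I x) = (\<Sum>i\<in>{1..m}. of_bool (i \<in> I x))" by simp
    qed
    also have "\<dots> = (\<Sum>i\<in>{1..m}. \<Sum>y\<in>{1..n-1}. of_bool (i \<in> I y))" by (rule sum.swap)
    also have "\<dots> = (\<Sum>i\<in>{1..m}. card {y \<in> {1..n-1}. i \<in> I y})"
      by (intro sum.cong refl) (rule card_filter_sum[symmetric], simp)
    finally show ?thesis .
  qed
  have "(\<Sum>y\<in>{1..n-1}. card (I y)) \<le> m"
  proof -
    have "(\<Sum>i\<in>{1..m}. card {y \<in> {1..n-1}. i \<in> I y}) \<le> (\<Sum>i\<in>{1..m}. 1)"
      by (rule sum_mono) (rule card1)
    then show ?thesis using sumeq by simp
  qed
  moreover have "(\<Sum>y\<in>{1..n-1}. (2::nat)) = m" using m by simp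
  ultimately have "(\<Sum>y\<in>{1..n-1}. card (I y) - 2) = 0"
    using sum_subtractf_nat[of "{1..n-1}" "\<lambda>_. 2" "\<lambda>y. card (I y)"] card2 by simp
  then have "card (I k) \<le> 2" using assms(4,5) by simp
  then have cardI: "card (I k) = 2" using card2[of k] assms(4,5) by simp
  then obtain x y where xy: "I k = {x, y}" "x \<noteq> y" unfolding card_2_iff by blast
  obtain f l where fl: "I k = {f, l}" "f < l"
  proof (cases "x < y")
    case True then show ?thesis using that xy by blast
  next
    case False then have "y < x" using xy by simp
    then show ?thesis using that[of y x] xy by (simp add: insert_commute)
  qed
  have fI: "f \<in> I k" and lI: "l \<in> I k" using fl by auto
  have k: "1 \<le> k" "k \<le> n - 1" using assms(4,5) by auto
  have fi: "1 \<le> f" "f \<le> m" and li: "1 \<le> l" "l \<le> m" using fI lI by (auto simp: I_def)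
  have "Q l k = Q m k" apply (rule constI) using fl li by auto
  then have Ql: "Q l k = k" using Qm by simp
  have Qf: "Q f k = Q (l-1) k" apply (rule constI) using fl li by auto
  have Qf0: "Q 0 k = Q (f-1) k" apply (rule constI) using fl fi by auto
  define B where "B = k + (b l - a(l-1))"
  have mvl: "Q (l-1) k = B" "k mod n = a(l-1) mod n" using moveI[OF k lI] Ql B_def by auto
  have mvf: "Q (f-1) k = B + (b f - a(f-1))" "B mod n = a(f-1) mod n" using moveI[OF k fI] Qf mvl by auto
  have sumd: "B + (b f - a(f-1)) = k + n" using mvf Qf0 Qy0[OF k] by simp
  have Bk: "B > k" using lt[OF li] B_def by simp
  have rl: "rs!(l-1) = arefl n k B"
    using R[OF li] arefl_cong[OF n0 mvl(2)[symmetric], of "b l" B] B_def by simp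
  have rf: "rs!(f-1) = arefl n (B - n) k"
  proof -
    have "a(f-1) mod n = (B - n) mod n" using mvf(2) by (simp add: mod_diff_right_eq[symmetric])
    moreover have "b f - a(f-1) = k - (B - n)" using sumd by simp
    ultimately show ?thesis using R[OF fi] arefl_cong[OF n0, of "a(f-1)" "B - n" "b f" k] by simp
  qed
  have hasl: "has_endpoint n (rs!(l-1)) k"
    unfolding has_endpoint_def apply (rule exI[of _ "a(l-1)"], rule exI[of _ "b l"])
    using R[OF li] ne[OF li] mvl(2) by simp
  have hasf: "has_endpoint n (rs!(f-1)) k"
  proof -
    have "Q (f-1) k mod n = b f mod n" using moveI[OF k fI] by blast
    then have "Q 0 k mod n = b f mod n" using Qf0 by simp
    then have "(k + n) mod n = b f mod n" using Qy0[OF k] by simp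
    then have "b f mod n = k mod n" by simp
    note bf = this
    show ?thesis unfolding has_endpoint_def apply (rule exI[of _ "a(f-1)"], rule exI[of _ "b f"])
      using R[OF fi] ne[OF fi] bf by simp
  qed
  have range: "\<forall>j\<in>{1..length rs}. has_endpoint n (rs ! (j - 1)) k \<longrightarrow> f \<le> j \<and> j \<le> l"
  proof (intro ballI impI)
    fix j assume j: "j \<in> {1..length rs}" and he: "has_endpoint n (rs ! (j - 1)) k"
    then have ji: "1 \<le> j" "j \<le> m" by (auto simp: m_def)
    obtain a' b' where ab': "a' mod n \<noteq> b' mod n" "rs!(j-1) = arefl n a' b'"
      "a' mod n = k mod n \<or> b' mod n = k mod n" using he unfolding has_endpoint_def by blast
    have nm: "(rs!(j-1)) x \<noteq> x" if "x mod n = k mod n" for x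
      using arefl_moves[OF ab'(1), of x] ab'(2,3) that by auto
    show "f \<le> j \<and> j \<le> l"
    proof (rule ccontr)
      assume "\<not> (f \<le> j \<and> j \<le> l)"
      then have out: "j < f \<or> l < j" by auto
      then have jn: "j \<notin> I k" using fl by auto
      then have eq: "Q (j-1) k = Q j k" using ji by (auto simp: I_def)
      have "Q j k mod n = k mod n"
      proof (cases "j < f")
        case True
        have "Q 0 k = Q j k" apply (rule constI) using fl ji True by auto
        then have "Q j k = k + n" using Qy0[OF k] by simp
        then show ?thesis by simp
      next
        case False
        then have "l < j" using out by simp
        have "Q j k = Q m k" apply (rule constI) using fl ji \<open>l < j\<close> by auto
        then show ?thesis using Qm by simp
      qed
      then show False using nm[of "Q j k"] eq Qstep[OF ji] R[OF ji] by simp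
    qed
  qed
  have incr: "{j \<in> {1..length rs}. increases rs j k} = {f, l}"
  proof -
    have "increases rs j k \<longleftrightarrow> j \<in> I k" if j: "j \<in> {1..length rs}" for j
    proof -
      have ji: "1 \<le> j" "j \<le> m" using j by (auto simp: m_def)
      have "increases rs j k \<longleftrightarrow> Q (j-1) k > Q j k" by (simp add: increases_def Q_def)
      also have "\<dots> \<longleftrightarrow> Q (j-1) k \<noteq> Q j k" using nodec[OF k ji] by auto
      finally show ?thesis using ji by (simp add: I_def)
    qed
    moreover have "I k \<subseteq> {1..length rs}" by (auto simp: I_def m_def)
    ultimately show ?thesis using fl(1) by blast
  qed
  show ?thesis
    apply (rule exI[of _ f], rule exI[of _ l])
    apply (intro conjI)
    using fi li fl(2) hasf hasl range incr apply (simp_all add: m_def)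
    apply (rule exI[of _ B])
    using rf rl Bk by simp
qed

end
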